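(* Let $n\ge2$, $R>0$, $\alpha:=\sqrt[3]{9n-15}$ and $u^*(x):=-\alpha|x|^{1/3}$ for $x\in\overline{B_R}$ (constant in time). Then $u^*u^{*3}_r\in L^1_{loc}(B_R\times[0,\infty))$, $\nabla u^*\in L^1_{loc}(B_R\times[0,\infty))$, and for every $\varphi\in C_c^\infty(B_R\times(0,\infty))$ $$-\int_0^\infty\!\!\int_{B_R}\varphi_tu^*=-\int_0^\infty\!\!\int_{B_R}\nabla u^*\cdot\nabla\varphi+\int_0^\infty\!\!\int_{B_R}u^*(u^*_r)^3\varphi;$$ that is, $u^*$ is a weak solution of $u_t=\Delta u+uu_r^3$ in $B_R\times(0,\infty)$ with $u=u^*(R)$ on $\partial B_R$ and initial datum $u^*$.
   Context: $B_R=\{x\in\mathbb R^n:|x|<R\}$; $u^*_r$ denotes the radial derivative. *)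

theory Defs
  imports "HOL-Analysis.Analysis"
begin

fun dir_derivs :: "'a::real_normed_vector list \<Rightarrow> ('a \<Rightarrow> real) \<Rightarrow> 'a \<Rightarrow> real" where
  "dir_derivs [] f = f"
| "dir_derivs (v # vs) f = (\<lambda>x. frechet_derivative (dir_derivs vs f) (at x) v)"

definition smooth_fun :: "('a::real_normed_vector \<Rightarrow> real) \<Rightarrow> bool" where
  "smooth_fun f \<longleftrightarrow> (\<forall>vs. dir_derivs vs f differentiable_on UNIV)"

definition test_fun_on :: "'a::real_normed_vector set \<Rightarrow> ('a \<Rightarrow> real) \<Rightarrow> bool" where
  "test_fun_on U f \<longleftrightarrow> smooth_fun f \<and> compact (closure {z. f z \<noteq> 0})
      \<and> closure {z. f z \<noteq> 0} \<subseteq> U"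

definition loc_integrable_on ::
  "('a::euclidean_space \<Rightarrow> 'b::{banach, second_countable_topology}) \<Rightarrow> 'a set \<Rightarrow> bool" where
  "loc_integrable_on f S \<longleftrightarrow> (\<forall>K. compact K \<and> K \<subseteq> S \<longrightarrow> set_integrable lborel K f)"

definition grad :: "(real^'n \<Rightarrow> real) \<Rightarrow> real^'n \<Rightarrow> real^'n" where
  "grad f x = (\<chi> i. deriv (\<lambda>s. f (x + s *\<^sub>R axis i 1)) 0)"

definition radial_deriv :: "(real^'n \<Rightarrow> real) \<Rightarrow> real^'n \<Rightarrow> real" where
  "radial_deriv f x = deriv (\<lambda>r. f (r *\<^sub>R (x /\<^sub>R norm x))) (norm x)"

definition ustar :: "nat \<Rightarrow> real^'n \<Rightarrow> real" where
  "ustar n x = - root 3 (9 * real n - 15) * norm x powr (1/3)"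

end

theory Submission
  imports Defs "HOL-Analysis.Analysis"
begin


lemma exists_shell:
  fixes r R :: real assumes "0 < r" "r \<le> R"
  shows "\<exists>k::nat. R / 2^(k+1) < r \<and> r \<le> R / 2^k"
proof -
  have "\<exists>k::nat. R / 2^(k+1) < r"
  proof -
    obtain k::nat where "R / r < 2^k" using real_arch_pow[of 2 "R/r"] by auto
    then have "R / 2^k < r" using assms by (simp add: field_simps)
    also have "R/2^(k+1) \<le> R/2^k" using assms by (simp add: frac_le)
    finally show ?thesis by (metis \<open>R / 2 ^ (k+1) \<le> R / 2 ^ k\<close> \<open>R / 2 ^ k < r\<close> le_less_trans)
  qed
  define k where "k = (LEAST k::nat. R / 2^(k+1) < r)"
  have k1: "R / 2^(k+1) < r" unfolding k_def by (rule LeastI_ex) fact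
  have "r \<le> R / 2^k"
  proof (cases k)
    case 0 then show ?thesis using assms by simp
  next
    case (Suc j)
    then have "\<not> R / 2^(j+1) < r" using not_less_Least[of j "\<lambda>k. R / 2^(k+1) < r"] unfolding k_def by auto
    then show ?thesis using Suc by simp
  qed
  with k1 show ?thesis by blast
qed



lemma geom_shell_summable:
  fixes R :: real and n :: nat assumes R: "R > 0" and n: "n \<ge> 2"
  shows "summable (\<lambda>k::nat. (R/2^(k+1)) powr (-5/3) * (R/2^k)^n)"
proof -
  define q :: real where "q = 2 powr (5/3) / 2^n"
  have "(2::real) powr (5/3) < 2 powr 2" by (rule powr_less_mono) auto
  also have "(2::real) powr 2 \<le> 2^n" using n
    by (metis of_nat_numeral power_increasing powr_realpow one_le_numeral zero_less_numeral)
  finally have q1: "q < 1" unfolding q_def by simp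
  have q0: "q \<ge> 0" unfolding q_def by simp
  have eq: "(R/2^(k+1)) powr (-5/3) * (R/2^k)^n = ((R/2) powr (-5/3) * R^n) * q^k" for k
  proof -
    have "(R/2^(k+1)) powr (-5/3) = (R/2) powr (-5/3) * (2^k) powr (5/3)"
      using R by (simp add: powr_divide powr_minus powr_mult field_simps)
    also have "(2^k::real) powr (5/3) = (2 powr (5/3))^k"
      by (simp add: powr_realpow[symmetric] powr_powr mult.commute)
    finally show ?thesis unfolding q_def by (simp add: power_divide field_simps power_mult_distrib flip: power_mult)
  qed
  show ?thesis unfolding eq by (intro summable_mult summable_geometric) (use q0 q1 in auto)
qed

lemma integrable_norm_powr:
  fixes R :: real assumes n: "DIM('a::euclidean_space) \<ge> 2" and R: "R > 0"
  shows "integrable lborel (\<lambda>x::'a. indicator (cball 0 R) x * norm x powr (-5/3))"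
proof (rule integrableI_nonneg)
  show "(\<lambda>x::'a. indicator (cball 0 R) x * norm x powr (-5/3)) \<in> borel_measurable lborel"
    by (intro borel_measurable_times borel_measurable_indicator powr_real_measurable) auto
  show "AE x in lborel. 0 \<le> indicator (cball 0 R) x * norm (x::'a) powr (-5/3)" by auto
  define b where "b k = (R/2^(k+1)) powr (-5/3)" for k::nat
  define c where "c k = R/2^k" for k :: nat
  have le: "ennreal (indicator (cball 0 R) x * norm x powr (-5/3)) \<le>
        (\<Sum>k. ennreal (b k) * indicator (cball (0::'a) (c k)) x)" for x :: 'a
  proof (cases "x \<noteq> 0 \<and> norm x \<le> R")
    case True
    then obtain k where k: "R / 2^(k+1) < norm x" "norm x \<le> R/2^k"
      using exists_shell[of "norm x" R] by auto
    have "norm x powr (-5/3) \<le> b k" unfolding b_def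
      using k R by (intro powr_mono2') auto
    then have "ennreal (indicator (cball 0 R) x * norm x powr (-5/3)) \<le> ennreal (b k) * indicator (cball (0::'a) (c k)) x"
      using True k by (auto simp: c_def indicator_def dist_norm ennreal_leI)
    also have "\<dots> \<le> (\<Sum>k. ennreal (b k) * indicator (cball (0::'a) (c k)) x)"
      using sum_le_suminf[OF summableI[of "\<lambda>k. ennreal (b k) * indicator (cball (0::'a) (c k)) x"], of "{k}"] by (simp only: sum.insert sum.empty finite.intros zero_le simp_thms add_0_right insert_not_empty empty_iff)
    finally show ?thesis .
  next
    case False then show ?thesis by (auto simp: indicator_def dist_norm)
  qed
  have "(\<integral>\<^sup>+x. ennreal (indicator (cball 0 R) (x::'a) * norm x powr (-5/3)) \<partial>lborel) \<le>
        (\<integral>\<^sup>+x. (\<Sum>k. ennreal (b k) * indicator (cball (0::'a) (c k)) x) \<partial>lborel)"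
    by (rule nn_integral_mono, rule le)
  also have "\<dots> = (\<Sum>k. \<integral>\<^sup>+x. ennreal (b k) * indicator (cball (0::'a) (c k)) x \<partial>lborel)"
    by (intro nn_integral_suminf borel_measurable_times_ennreal borel_measurable_indicator) auto
  also have "\<dots> = (\<Sum>k. ennreal (b k * (unit_ball_vol (DIM('a)) * c k ^ DIM('a))))"
    using R by (subst nn_integral_cmult_indicator) (auto simp: emeasure_cball b_def c_def ennreal_mult)
  also have "\<dots> = ennreal (\<Sum>k. b k * (unit_ball_vol (DIM('a)) * c k ^ DIM('a)))"
  proof (rule suminf_ennreal2)
    show "\<And>k. 0 \<le> b k * (unit_ball_vol (real DIM('a)) * c k ^ DIM('a))"
      using R by (auto simp: b_def c_def)
    have "summable (\<lambda>k. unit_ball_vol (DIM('a)) * (b k * c k ^ DIM('a)))"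
      unfolding b_def c_def by (intro summable_mult geom_shell_summable R n)
    then show "summable (\<lambda>k. b k * (unit_ball_vol (real DIM('a)) * c k ^ DIM('a)))"
      by (simp add: mult_ac)
  qed
  also have "\<dots> < \<infinity>" by simp
  finally show "(\<integral>\<^sup>+x. ennreal (indicator (cball 0 R) (x::'a) * norm x powr (-5/3)) \<partial>lborel) < \<infinity>" .
qed



lemma integrable_prod_indicator:
  fixes f :: "'a::euclidean_space \<Rightarrow> real"
  assumes f: "integrable lborel f"
  shows "integrable lborel (\<lambda>(x::'a, t::real). f x * indicator {a..b} t)"
proof -
  have fm[measurable]: "f \<in> borel_measurable borel" using borel_measurable_integrable[OF f] by simp
  have "integrable (lborel \<Otimes>\<^sub>M lborel) (\<lambda>(x::'a, t::real). f x * indicator {a..b} t)"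
  proof (subst integrable_iff_bounded, safe)
    show "(\<lambda>(x::'a, t::real). f x * indicator {a..b} t) \<in> borel_measurable (lborel \<Otimes>\<^sub>M lborel)"
      by measurable
    have "(\<integral>\<^sup>+ z. ennreal (norm (case z of (x, t) \<Rightarrow> f x * indicator {a..b} t)) \<partial>(lborel \<Otimes>\<^sub>M lborel))
        = (\<integral>\<^sup>+ x. \<integral>\<^sup>+ t. ennreal (norm (f x)) * indicator {a..b} t \<partial>lborel \<partial>lborel)"
      by (subst lborel.nn_integral_fst[symmetric])
         (auto intro!: nn_integral_cong simp: norm_mult indicator_def ennreal_mult)
    also have "\<dots> = (\<integral>\<^sup>+ x. ennreal (norm (f x)) * emeasure lborel {a..b} \<partial>lborel)"
      by (subst nn_integral_cmult_indicator) auto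
    also have "\<dots> = (\<integral>\<^sup>+ x. ennreal (norm (f x)) \<partial>lborel) * emeasure lborel {a..b}"
      by (rule nn_integral_multc) auto
    also have "\<dots> < \<infinity>"
      using f by (auto simp: integrable_iff_bounded ennreal_mult_less_top emeasure_lborel_Icc_eq)
    finally show "(\<integral>\<^sup>+ z. ennreal (norm (case z of (x, t) \<Rightarrow> f x * indicator {a..b} t)) \<partial>(lborel \<Otimes>\<^sub>M lborel)) < \<infinity>" .
  qed
  then show ?thesis by (simp add: lborel_prod)
qed

lemma loc_int_prod:
  fixes F :: "'a::euclidean_space \<Rightarrow> 'b::{banach, second_countable_topology}"
  assumes n: "DIM('a) \<ge> 2" and R: "R > 0" and Fm: "F \<in> borel_measurable borel"
    and bnd: "\<And>x. x \<in> ball 0 R \<Longrightarrow> norm (F x) \<le> C * norm x powr (-5/3) + D"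
  shows "\<forall>K. compact K \<and> K \<subseteq> ball 0 R \<times> {0..} \<longrightarrow> set_integrable lborel K (\<lambda>(x::'a, t::real). F x)"
proof safe
  fix K :: "('a \<times> real) set" assume K: "compact K" "K \<subseteq> ball 0 R \<times> {0..}"
  obtain T where T: "\<And>z. z \<in> K \<Longrightarrow> norm z \<le> T"
    using compact_imp_bounded[OF K(1)] bounded_iff by blast
  have Kt: "snd z \<in> {-T..T}" if "z \<in> K" for z
  proof -
    have "norm (snd z) \<le> norm z" using norm_snd_le[of "snd z" "fst z"] by simp
    with T[OF that] show ?thesis by (auto simp: abs_le_iff)
  qed
  have Kx: "fst z \<in> cball 0 R" if "z \<in> K" for z using K(2) that by (auto simp: mem_Times_iff)
  have Kx0: "fst z \<in> ball 0 R" if "z \<in> K" for z using K(2) that by (auto simp: mem_Times_iff)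
  define G where "G = (\<lambda>x::'a. \<bar>C\<bar> * (indicator (cball 0 R) x * norm x powr (-5/3)) + \<bar>D\<bar> * indicator (cball 0 R) x)"
  have Gi: "integrable lborel G" unfolding G_def
    by (intro Bochner_Integration.integrable_add integrable_mult_right integrable_norm_powr n R)
       (use emeasure_lborel_cball_finite[of "0::'a" R] in \<open>auto simp: integrable_indicator_iff\<close>)
  have GI: "integrable lborel (\<lambda>(x::'a, t::real). G x * indicator {-T..T} t)"
    by (rule integrable_prod_indicator[OF Gi])
  show "set_integrable lborel K (\<lambda>(x::'a, t::real). F x)"
    unfolding set_integrable_def
  proof (rule Bochner_Integration.integrable_bound[OF GI])
    have [measurable]: "K \<in> sets borel" using K(1) by (simp add: compact_imp_closed)
    show "(\<lambda>z. indicator K z *\<^sub>R (case z of (x, t) \<Rightarrow> F x)) \<in> borel_measurable lborel"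
    proof -
      have f1: "(\<lambda>z::'a\<times>real. fst z) \<in> borel_measurable borel"
        by (intro borel_measurable_continuous_onI continuous_intros)
      have "(\<lambda>z::'a\<times>real. F (fst z)) \<in> borel_measurable borel"
        using measurable_compose[OF f1 Fm] by simp
      then show ?thesis
        by (simp add: case_prod_beta)
    qed
    show "AE z in lborel. norm (indicator K z *\<^sub>R (case z of (x, t) \<Rightarrow> F x)) \<le> norm (case z of (x, t) \<Rightarrow> G x * indicator {-T..T} t)"
    proof (rule AE_I2, clarify)
      fix x :: 'a and t :: real
      show "norm (indicator K (x, t) *\<^sub>R F x) \<le> norm (G x * indicator {- T..T} t)"
      proof (cases "(x,t) \<in> K")
        case True
        then have x: "x \<in> ball 0 R" "x \<in> cball 0 R" and t: "t \<in> {-T..T}" using Kx0 Kx Kt by force+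
        have "norm (F x) \<le> C * norm x powr (-5/3) + D" by (rule bnd[OF x(1)])
        also have "\<dots> \<le> \<bar>C\<bar> * norm x powr (-5/3) + \<bar>D\<bar>"
          by (intro add_mono mult_right_mono) auto
        also have "\<dots> = G x * indicator {-T..T} t" using x t by (simp add: G_def)
        also have "\<dots> \<le> norm (G x * indicator {-T..T} t)" by simp
        finally show ?thesis using True by simp
      qed simp
    qed
  qed
qed


lemma norm_line_sq:
  fixes x :: "real^'n"
  shows "norm (x + s *\<^sub>R axis i 1)^2 = x \<bullet> x + 2 * s * x$i + s^2"
proof -
  have "norm (x + s *\<^sub>R axis i 1)^2 = (x + s *\<^sub>R axis i 1) \<bullet> (x + s *\<^sub>R axis i 1)"
    by (simp add: power2_norm_eq_inner)
  also have "\<dots> = x \<bullet> x + 2 * s * x$i + s^2"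
    by (simp add: inner_add_left inner_add_right inner_axis inner_commute[of "axis i 1"] algebra_simps power2_eq_square)
  finally show ?thesis .
qed

lemma deriv_line_powr:
  fixes x :: "real^'n"
  assumes pos: "x \<bullet> x + \<epsilon> > 0"
  shows "((\<lambda>s. (norm (x + s *\<^sub>R axis i 1)^2 + \<epsilon>) powr a) has_real_derivative
          a * (x \<bullet> x + \<epsilon>) powr (a - 1) * (2 * x$i)) (at 0)"
proof -
  have eq: "(\<lambda>s. (norm (x + s *\<^sub>R axis i 1)^2 + \<epsilon>) powr a) = (\<lambda>s. (x \<bullet> x + 2 * s * x$i + s^2 + \<epsilon>) powr a)"
    by (simp add: norm_line_sq)
  have d: "((\<lambda>s. x \<bullet> x + 2 * s * x$i + s^2 + \<epsilon>) has_real_derivative (2 * x$i)) (at 0)"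
    by (auto intro!: derivative_eq_intros)
  show ?thesis unfolding eq using DERIV_fun_powr[OF d, of a] pos by simp
qed

definition Ue :: "real \<Rightarrow> real \<Rightarrow> real^'n \<Rightarrow> real" where
  "Ue a \<epsilon> x = -a * (norm x^2 + \<epsilon>) powr (1/6)"
definition Pe :: "real \<Rightarrow> real \<Rightarrow> 'n \<Rightarrow> real^'n \<Rightarrow> real" where
  "Pe a \<epsilon> i x = -a/3 * x$i * (norm x^2 + \<epsilon>) powr (-5/6)"
definition Qe :: "real \<Rightarrow> real \<Rightarrow> 'n \<Rightarrow> real^'n \<Rightarrow> real" where
  "Qe a \<epsilon> i x = -a/3 * ((norm x^2 + \<epsilon>) powr (-5/6) - 5/3 * (x$i)^2 * (norm x^2 + \<epsilon>) powr (-11/6))"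

lemma dUe:
  fixes x :: "real^'n"
  assumes pos: "norm x^2 + \<epsilon> > 0"
  shows "((\<lambda>s. Ue a \<epsilon> (x + s *\<^sub>R axis i 1)) has_real_derivative Pe a \<epsilon> i x) (at 0)"
proof -
  have pos': "x \<bullet> x + \<epsilon> > 0" using pos by (simp add: power2_norm_eq_inner)
  have "((\<lambda>s. -a * (norm (x + s *\<^sub>R axis i 1)^2 + \<epsilon>) powr (1/6)) has_real_derivative
          -a * (1/6 * (x \<bullet> x + \<epsilon>) powr (1/6 - 1) * (2 * x$i))) (at 0)"
    by (intro DERIV_cmult deriv_line_powr pos')
  moreover have "-a * (1/6 * (x \<bullet> x + \<epsilon>) powr (1/6 - 1) * (2 * x$i)) = Pe a \<epsilon> i x"
    by (simp add: Pe_def power2_norm_eq_inner)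
  ultimately show ?thesis by (simp add: Ue_def)
qed

lemma dPe:
  fixes x :: "real^'n"
  assumes pos: "norm x^2 + \<epsilon> > 0"
  shows "((\<lambda>s. Pe a \<epsilon> i (x + s *\<^sub>R axis i 1)) has_real_derivative Qe a \<epsilon> i x) (at 0)"
proof -
  have pos': "x \<bullet> x + \<epsilon> > 0" using pos by (simp add: power2_norm_eq_inner)
  have d1: "((\<lambda>s. x$i + s) has_real_derivative 1) (at 0)" by (auto intro!: derivative_eq_intros)
  have "((\<lambda>s. -a/3 * ((x$i + s) * (norm (x + s *\<^sub>R axis i 1)^2 + \<epsilon>) powr (-5/6))) has_real_derivative
          -a/3 * (1 * (norm (x + 0 *\<^sub>R axis i 1)^2 + \<epsilon>) powr (-5/6) + (x$i + 0) * (-5/6 * (x \<bullet> x + \<epsilon>) powr (-5/6 - 1) * (2 * x$i)))) (at 0)"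
    by (rule DERIV_cong[OF DERIV_cmult[OF DERIV_mult[OF d1 deriv_line_powr[OF pos', of i "-5/6"]], of "-a/3"]]) simp
  moreover have "-a/3 * (1 * (norm (x + 0 *\<^sub>R axis i 1)^2 + \<epsilon>) powr (-5/6) + (x$i + 0) * (-5/6 * (x \<bullet> x + \<epsilon>) powr (-5/6 - 1) * (2 * x$i))) = Qe a \<epsilon> i x"
    by (simp add: Qe_def power2_norm_eq_inner[symmetric] power2_eq_square algebra_simps)
  moreover have "(\<lambda>s. -a/3 * ((x$i + s) * (norm (x + s *\<^sub>R axis i 1)^2 + \<epsilon>) powr (-5/6))) =
      (\<lambda>s. Pe a \<epsilon> i (x + s *\<^sub>R axis i 1))"
    by (simp add: Pe_def axis_nth mult.assoc)
  ultimately show ?thesis by simp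
qed



lemma ustar_Ue: "ustar n x = Ue (root 3 (9 * real n - 15)) 0 x"
proof (cases "x = 0")
  case True then show ?thesis by (simp add: ustar_def Ue_def)
next
  case False
  then have p: "norm x > 0" by simp
  have "(norm x ^ 2) powr (1/6) = norm x powr (1/3)"
    by (subst powr_realpow[OF p, of 2, symmetric], subst powr_powr, simp)
  then show ?thesis by (simp add: ustar_def Ue_def)
qed

lemma grad_ustar:
  fixes x :: "real^'n" assumes "x \<noteq> 0"
  shows "grad (ustar n) x = (\<chi> i. Pe (root 3 (9 * real n - 15)) 0 i x)"
  unfolding grad_def ustar_Ue[abs_def]
  by (intro vec_eq_iff[THEN iffD2] allI) (simp add: DERIV_imp_deriv dUe assms)

lemma radial_ustar:
  fixes x :: "real^'n" assumes x: "x \<noteq> 0"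
  shows "radial_deriv (ustar n) x = - root 3 (9 * real n - 15) / 3 * norm x powr (-2/3)"
proof -
  define a where "a = root 3 (9 * real n - 15)"
  define v where "v = x /\<^sub>R norm x"
  have nv: "norm v = 1" using x by (simp add: v_def)
  have r0: "norm x > 0" using x by simp
  have ev: "\<forall>\<^sub>F r in nhds (norm x). ustar n (r *\<^sub>R v) = -a * r powr (1/3)"
  proof -
    have "\<forall>\<^sub>F r in nhds (norm x). r > 0" using eventually_nhds_in_open[of "{0<..}" "norm x"] r0 by simp
    then show ?thesis by eventually_elim (simp add: ustar_def a_def nv)
  qed
  have "((\<lambda>r. -a * r powr (1/3)) has_real_derivative -a * (1/3 * norm x powr (1/3 - 1))) (at (norm x))"
    by (intro DERIV_cmult has_real_derivative_powr r0)
  then have "((\<lambda>r. ustar n (r *\<^sub>R v)) has_real_derivative -a * (1/3 * norm x powr (1/3 - 1))) (at (norm x))"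
    by (rule DERIV_cong_ev[OF refl ev[unfolded eq_commute[of "ustar n _"]] refl, THEN iffD1, rotated]) 
  then show ?thesis unfolding radial_deriv_def v_def[symmetric]
    by (simp add: DERIV_imp_deriv a_def)
qed

lemma w_ustar:
  fixes x :: "real^'n"
  shows "ustar n x * radial_deriv (ustar n) x ^ 3 = root 3 (9 * real n - 15) ^ 4 / 27 * norm x powr (-5/3)"
proof (cases "x = 0")
  case True then show ?thesis by (simp add: ustar_def)
next
  case False
  then have p: "norm x > 0" by simp
  have "(norm x powr (-2/3))^3 = norm x powr (-2)"
    by (subst powr_realpow[of "norm x powr (-2/3)" 3, symmetric], use p in simp, subst powr_powr, simp)
  moreover have "norm x powr (1/3) * norm x powr (-2) = norm x powr (-5/3)"
    by (simp add: powr_add[symmetric])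
  moreover have "\<And>a q p::real. (-a*q) * (-a/3*p)^3 = a^4/27 * (q * p^3)"
    by (simp add: power_mult_distrib power_divide eval_nat_numeral algebra_simps)
  ultimately show ?thesis
    unfolding radial_ustar[OF False] ustar_def by metis
qed


lemma deriv_zero_outside:
  fixes h :: "'a::real_normed_vector \<Rightarrow> real"
  assumes C: "closed C" and h0: "\<And>x. x \<notin> C \<Longrightarrow> h x = 0"
    and d: "((\<lambda>s. h (x + s *\<^sub>R e)) has_real_derivative g) (at 0)" and x: "x \<notin> C"
  shows "g = 0"
proof -
  have "open (- C)" using C by auto
  then obtain r where r: "r > 0" "ball x r \<subseteq> - C" using x by (auto simp: open_contains_ball)
  have o: "open ((\<lambda>s::real. x + s *\<^sub>R e) -` ball x r)"
    by (intro open_vimage continuous_intros) auto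
  have "\<forall>\<^sub>F s in nhds 0. s \<in> (\<lambda>s::real. x + s *\<^sub>R e) -` ball x r"
    by (rule eventually_nhds_in_open[OF o]) (use r in auto)
  then have "\<forall>\<^sub>F s in nhds 0. x + s *\<^sub>R e \<in> ball x r" by simp
  then have ev: "\<forall>\<^sub>F s in nhds 0. h (x + s *\<^sub>R e) = 0"
    by eventually_elim (use r h0 in auto)
  have "((\<lambda>s. h (x + s *\<^sub>R e)) has_real_derivative 0) (at 0)"
    by (rule DERIV_cong_ev[OF refl ev, THEN iffD2]) (auto intro: derivative_eq_intros)
  then show ?thesis using DERIV_unique d by blast
qed

lemma integrable_cont_compact:
  fixes g :: "'a::euclidean_space \<Rightarrow> real"
  assumes g: "continuous_on UNIV g" and C: "compact C" and g0: "\<And>x. x \<notin> C \<Longrightarrow> g x = 0"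
  shows "integrable lborel g"
proof -
  obtain M where M: "\<And>x. x \<in> C \<Longrightarrow> norm (g x) \<le> M"
    using compact_imp_bounded[OF compact_continuous_image[OF continuous_on_subset[OF g] C]]
    by (auto simp: bounded_pos)
  have [measurable]: "C \<in> sets borel" using C by (simp add: compact_imp_closed)
  show ?thesis
  proof (rule integrableI_bounded_set[where A=C and B=M])
    show "g \<in> borel_measurable lborel" using g by (simp add: borel_measurable_continuous_onI)
    show "emeasure lborel C < \<infinity>" using C by (intro emeasure_bounded_finite compact_imp_bounded)
  qed (use M g0 in auto)
qed

lemma int_partial_zero:
  fixes h g :: "'a::euclidean_space \<Rightarrow> real" and e :: 'a
  assumes hc: "continuous_on UNIV h" and gc: "continuous_on UNIV g" and C: "compact C"
    and h0: "\<And>x. x \<notin> C \<Longrightarrow> h x = 0"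
    and d: "\<And>x. ((\<lambda>s. h (x + s *\<^sub>R e)) has_real_derivative g x) (at 0)"
  shows "integrable lborel g" "integral\<^sup>L lborel g = 0"
proof -
  have Ccl: "closed C" using C by (rule compact_imp_closed)
  have g0: "g x = 0" if "x \<notin> C" for x by (rule deriv_zero_outside[OF Ccl h0 d that])
  show gi: "integrable lborel g" by (rule integrable_cont_compact[OF gc C g0])
  have hi: "integrable lborel h" by (rule integrable_cont_compact[OF hc C h0])
  have hm[measurable]: "h \<in> borel_measurable borel" using hc by (simp add: borel_measurable_continuous_onI)
  have gm[measurable]: "g \<in> borel_measurable borel" using gc by (simp add: borel_measurable_continuous_onI)
  obtain M where M: "\<And>x. x \<in> C \<Longrightarrow> norm (g x) \<le> M" and Mpos: "M > 0"
    using compact_imp_bounded[OF compact_continuous_image[OF continuous_on_subset[OF gc] C]]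
    by (auto simp: bounded_pos)
  have Mg: "\<bar>g x\<bar> \<le> M" for x using M[of x] g0[of x] Mpos by (cases "x \<in> C") auto
  define C' where "C' = (\<lambda>z. fst z - snd z *\<^sub>R e) ` (C \<times> {0..1::real})"
  have C': "compact C'" unfolding C'_def
    by (intro compact_continuous_image continuous_intros compact_Times C compact_Icc)
  have [measurable]: "C' \<in> sets borel" using C' by (simp add: compact_imp_closed)
  define s :: "nat \<Rightarrow> real" where "s k = 1 / Suc k" for k
  have s0: "s k > 0" "s k \<le> 1" for k by (auto simp: s_def)
  define D where "D k x = (h (x + s k *\<^sub>R e) - h x) / s k" for k x
  have transl: "integral\<^sup>L lborel (\<lambda>x. h (x + c)) = integral\<^sup>L lborel h" 
    and transli: "integrable lborel (\<lambda>x. h (x + c))" for c :: 'a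
  proof -
    have "integral\<^sup>L lborel h = integral\<^sup>L (distr lborel borel ((+) c)) h" by (simp add: lborel_distr_plus)
    also have "\<dots> = integral\<^sup>L lborel (\<lambda>x. h (c + x))" by (rule integral_distr) auto
    finally show "integral\<^sup>L lborel (\<lambda>x. h (x + c)) = integral\<^sup>L lborel h" by (simp add: add.commute)
    have "integrable (distr lborel borel ((+) c)) h" using hi by (simp add: lborel_distr_plus)
    then have "integrable lborel (\<lambda>x. h (c + x))" by (subst (asm) integrable_distr_eq) auto
    then show "integrable lborel (\<lambda>x. h (x + c))" by (simp add: add.commute)
  qed
  have intD: "integral\<^sup>L lborel (D k) = 0" for k
  proof -
    have "integral\<^sup>L lborel (D k) = (integral\<^sup>L lborel (\<lambda>x. h (x + s k *\<^sub>R e)) - integral\<^sup>L lborel h) / s k"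
      unfolding D_def using transli hi by simp
    then show ?thesis using transl by simp
  qed
  have lim: "(\<lambda>k. D k x) \<longlonglongrightarrow> g x" for x
  proof -
    have "((\<lambda>y. (h (x + y *\<^sub>R e) - h (x + 0 *\<^sub>R e)) / (y - 0)) \<longlongrightarrow> g x) (at 0)"
      using d[of x] by (simp add: has_field_derivative_iff)
    moreover have "filterlim s (at 0) sequentially"
    proof -
      have "s \<longlonglongrightarrow> 0" unfolding s_def using LIMSEQ_inverse_real_of_nat by (simp add: inverse_eq_divide)
      moreover have "\<forall>\<^sub>F k in sequentially. s k \<noteq> 0" using s0(1) by (simp add: less_imp_neq[symmetric])
      ultimately show ?thesis by (auto simp: filterlim_at)
    qed
    ultimately have "((\<lambda>y. (h (x + y *\<^sub>R e) - h (x + 0 *\<^sub>R e)) / (y - 0)) \<circ> s) \<longlonglongrightarrow> g x"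
      by (rule filterlim_compose[unfolded comp_def[symmetric]])
    then show ?thesis by (simp add: D_def comp_def)
  qed
  have bound: "norm (D k x) \<le> M * indicator C' x" for k x
  proof (cases "x \<in> C \<or> x + s k *\<^sub>R e \<in> C")
    case True
    have xC': "x \<in> C'"
    proof (cases "x \<in> C")
      case True then show ?thesis unfolding C'_def by (intro image_eqI[of _ _ "(x, 0)"]) auto
    next
      case False
      with \<open>x \<in> C \<or> _\<close> have "x + s k *\<^sub>R e \<in> C" by auto
      then show ?thesis unfolding C'_def using s0[of k]
        by (intro image_eqI[of _ _ "(x + s k *\<^sub>R e, s k)"]) auto
    qed
    have der: "((\<lambda>r. h (x + r *\<^sub>R e)) has_real_derivative g (x + r *\<^sub>R e)) (at r)" for r
    proof -
      have "((\<lambda>t. h (x + r *\<^sub>R e + t *\<^sub>R e)) has_real_derivative g (x + r *\<^sub>R e)) (at 0)" by (rule d)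
      then have "((\<lambda>t. h (x + (t + r) *\<^sub>R e)) has_real_derivative g (x + r *\<^sub>R e)) (at 0)"
        by (simp add: scaleR_add_left add.assoc add.commute add.left_commute)
      then show ?thesis using DERIV_shift[of "\<lambda>r. h (x + r *\<^sub>R e)" _ 0 r] by simp
    qed
    obtain z where z: "0 < z" "z < s k" "h (x + s k *\<^sub>R e) - h (x + 0 *\<^sub>R e) = (s k - 0) * g (x + z *\<^sub>R e)"
      using MVT2[OF s0(1)[of k] der] by blast
    have "D k x = g (x + z *\<^sub>R e)" using z s0[of k] by (simp add: D_def)
    then show ?thesis using Mg[of "x + z *\<^sub>R e"] xC' by simp
  next
    case False
    then have "D k x = 0" using h0 by (simp add: D_def)
    then show ?thesis using Mpos by simp
  qed
  have "(\<lambda>k. integral\<^sup>L lborel (D k)) \<longlonglongrightarrow> integral\<^sup>L lborel g"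
  proof (rule integral_dominated_convergence[where w="\<lambda>x. M * indicator C' x"])
    show "g \<in> borel_measurable lborel" by simp
    show "\<And>k. D k \<in> borel_measurable lborel" unfolding D_def by measurable
    show "integrable lborel (\<lambda>x. M * indicator C' x)"
      using emeasure_bounded_finite[OF compact_imp_bounded[OF C']]
      by (intro integrable_mult_right) (auto simp: integrable_indicator_iff)
    show "AE x in lborel. (\<lambda>k. D k x) \<longlonglongrightarrow> g x" using lim by simp
    show "\<And>k. AE x in lborel. norm (D k x) \<le> M * indicator C' x" using bound by simp
  qed
  then show "integral\<^sup>L lborel g = 0" using intD by (simp add: LIMSEQ_const_iff)
qed



lemma smooth_differentiable:
  assumes "smooth_fun \<phi>" shows "\<phi> differentiable (at z)"
proof -
  have "dir_derivs [] \<phi> differentiable_on UNIV" using assms by (simp add: smooth_fun_def del: dir_derivs.simps)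
  then show ?thesis by (simp add: differentiable_on_def)
qed

lemma smooth_cont: "smooth_fun \<phi> \<Longrightarrow> continuous_on UNIV \<phi>"
  by (meson continuous_at_imp_continuous_on differentiable_imp_continuous_within smooth_differentiable)

lemma smooth_dcont:
  assumes "smooth_fun \<phi>" shows "continuous_on UNIV (\<lambda>z. frechet_derivative \<phi> (at z) v)"
proof -
  have "dir_derivs [v] \<phi> differentiable_on UNIV" using assms by (simp only: smooth_fun_def)
  then show ?thesis by (simp add: differentiable_imp_continuous_on)
qed

lemma smooth_line_deriv:
  fixes \<phi> :: "'a::real_normed_vector \<Rightarrow> real"
  assumes "smooth_fun \<phi>"
  shows "((\<lambda>s. \<phi> (z + s *\<^sub>R v)) has_real_derivative frechet_derivative \<phi> (at z) v) (at 0)"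
proof -
  define F where "F = frechet_derivative \<phi> (at z)"
  have d: "(\<phi> has_derivative F) (at z)"
    unfolding F_def using smooth_differentiable[OF assms] by (rule frechet_derivative_works[THEN iffD1])
  have l: "((\<lambda>s::real. z + s *\<^sub>R v) has_derivative (\<lambda>s. s *\<^sub>R v)) (at 0)"
    by (auto intro!: derivative_eq_intros)
  have d': "(\<phi> has_derivative F) (at (z + 0 *\<^sub>R v))" using d by simp
  have "((\<lambda>s. \<phi> (z + s *\<^sub>R v)) has_derivative (\<lambda>s. F (s *\<^sub>R v))) (at 0)"
    using has_derivative_compose[OF l d'] by (simp add: comp_def)
  moreover have "(\<lambda>s. F (s *\<^sub>R v)) = (\<lambda>s. F v * s)"
    using has_derivative_linear[OF d] by (auto simp: linear_scale mult.commute)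
  ultimately show ?thesis unfolding F_def by (simp add: has_field_derivative_def)
qed

lemma smooth_d_zero:
  fixes \<phi> :: "'a::real_normed_vector \<Rightarrow> real"
  assumes "smooth_fun \<phi>" "z \<notin> closure {z. \<phi> z \<noteq> 0}"
  shows "frechet_derivative \<phi> (at z) v = 0"
proof (rule deriv_zero_outside[OF closed_closure _ smooth_line_deriv[OF assms(1)] assms(2)])
  fix x assume "x \<notin> closure {z. \<phi> z \<noteq> 0}"
  then have "x \<notin> {z. \<phi> z \<noteq> 0}" using closure_subset[of "{z. \<phi> z \<noteq> 0}"] by (rule contra_subsetD[rotated])
  then show "\<phi> x = 0" by simp
qed

lemma grad_phi:
  fixes \<phi> :: "(real^'n) \<times> real \<Rightarrow> real"
  assumes "smooth_fun \<phi>"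
  shows "grad (\<lambda>y. \<phi> (y, t)) x = (\<chi> i. frechet_derivative \<phi> (at (x,t)) (axis i 1, 0))"
proof -
  have "deriv (\<lambda>s. \<phi> (x + s *\<^sub>R axis i 1, t)) 0 = frechet_derivative \<phi> (at (x,t)) (axis i 1, 0)" for i
    using DERIV_imp_deriv[OF smooth_line_deriv[OF assms, of "(x,t)" "(axis i 1, 0)"]] by simp
  then show ?thesis unfolding grad_def by (simp add: vec_eq_iff)
qed

lemma dt_phi:
  fixes \<phi> :: "'a::real_normed_vector \<times> real \<Rightarrow> real"
  assumes "smooth_fun \<phi>"
  shows "deriv (\<lambda>s. \<phi> (x, s)) t = frechet_derivative \<phi> (at (x,t)) (0, 1)"
proof -
  have "((\<lambda>s. \<phi> (x, s + t)) has_real_derivative frechet_derivative \<phi> (at (x,t)) (0, 1)) (at 0)"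
    using smooth_line_deriv[OF assms, of "(x,t)" "(0,1)"] by (simp add: add.commute)
  then have "((\<lambda>s. \<phi> (x, s)) has_real_derivative frechet_derivative \<phi> (at (x,t)) (0, 1)) (at t)"
    using DERIV_shift[of "\<lambda>s. \<phi> (x, s)" _ 0 t] by simp
  then show ?thesis by (rule DERIV_imp_deriv)
qed



lemma Pe_vec: "(\<chi> i. Pe a \<epsilon> i x) = (-a/3 * (norm x^2 + \<epsilon>) powr (-5/6)) *\<^sub>R x"
  by (simp add: vec_eq_iff Pe_def)

lemma sum_sq_norm: "(\<Sum>i\<in>UNIV. (x$i)^2) = norm (x::real^'n)^2"
  unfolding dot_square_norm[symmetric] inner_vec_def by (simp add: power2_eq_square)

lemma sumQ: "(\<Sum>i\<in>UNIV. Qe a \<epsilon> i (x::real^'n)) =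
   -a/3 * (CARD('n) * (norm x^2 + \<epsilon>) powr (-5/6) - 5/3 * norm x^2 * (norm x^2 + \<epsilon>) powr (-11/6))"
proof -
  define A where "A = -a/3 * (norm x^2 + \<epsilon>) powr (-5/6)"
  define B where "B = 5*a/9 * (norm x^2 + \<epsilon>) powr (-11/6)"
  have "(\<Sum>i\<in>UNIV. Qe a \<epsilon> i x) = (\<Sum>i\<in>UNIV. A + B * (x$i)^2)"
    by (intro sum.cong) (auto simp: Qe_def A_def B_def algebra_simps)
  also have "\<dots> = CARD('n) * A + B * norm x^2"
    by (simp only: sum.distrib sum_distrib_left[symmetric] sum_sq_norm sum_constant)
  finally show ?thesis by (simp add: A_def B_def algebra_simps)
qed

lemma sumQ0:
  fixes x :: "real^'n" assumes x: "x \<noteq> 0"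
  shows "(\<Sum>i\<in>UNIV. Qe a 0 i x) = -a/3 * (CARD('n) - 5/3) * norm x powr (-5/3)"
proof -
  have p: "norm x > 0" using x by simp
  have e1: "(norm x^2) powr (-5/6) = norm x powr (-5/3)"
    by (subst powr_realpow[OF p, of 2, symmetric], subst powr_powr, simp)
  have e2: "norm x^2 * (norm x^2) powr (-11/6) = norm x powr (-5/3)"
    apply (subst powr_realpow[OF p, of 2, symmetric])+
    apply (subst powr_powr)
    apply (subst powr_add[symmetric])
    by simp
  show ?thesis unfolding sumQ using e1 e2 by (simp add: algebra_simps)
qed

lemma bound_rho:
  fixes x :: "real^'n" assumes x: "x \<noteq> 0" and e: "\<epsilon> \<ge> 0"
  shows "(norm x^2 + \<epsilon>) powr (-5/6) \<le> norm x powr (-5/3)"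
    and "norm x^2 * (norm x^2 + \<epsilon>) powr (-11/6) \<le> norm x powr (-5/3)"
proof -
  have p: "norm x > 0" using x by simp
  have e1: "(norm x^2) powr (-5/6) = norm x powr (-5/3)"
    by (subst powr_realpow[OF p, of 2, symmetric], subst powr_powr, simp)
  have r: "norm x^2 + \<epsilon> \<ge> norm x ^2" "norm x^2 > 0" using e p by auto
  show 1: "(norm x^2 + \<epsilon>) powr (-5/6) \<le> norm x powr (-5/3)"
    unfolding e1[symmetric] by (rule powr_mono2') (use r in auto)
  have "norm x^2 * (norm x^2 + \<epsilon>) powr (-11/6) \<le> (norm x^2 + \<epsilon>) * (norm x^2 + \<epsilon>) powr (-11/6)"
    using r by (intro mult_right_mono) auto
  also have "\<dots> = (norm x^2 + \<epsilon>) powr 1 * (norm x^2 + \<epsilon>) powr (-11/6)"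
    using r by simp
  also have "\<dots> = (norm x^2 + \<epsilon>) powr (1 + -11/6)"
    by (rule powr_add[symmetric])
  also have "\<dots> = (norm x^2 + \<epsilon>) powr (-5/6)" by simp
  finally show "norm x^2 * (norm x^2 + \<epsilon>) powr (-11/6) \<le> norm x powr (-5/3)" using 1 by linarith
qed

lemma bound_sumQ:
  fixes x :: "real^'n" assumes x: "x \<noteq> 0" and e: "\<epsilon> \<ge> 0" and a: "a \<ge> 0"
  shows "\<bar>\<Sum>i\<in>UNIV. Qe a \<epsilon> i x\<bar> \<le> a/3 * (CARD('n) + 5/3) * norm x powr (-5/3)"
proof -
  note b = bound_rho[OF x e]
  have n1: "(norm x^2 + \<epsilon>) powr (-5/6) \<ge> 0" "norm x^2 * (norm x^2 + \<epsilon>) powr (-11/6) \<ge> 0" by auto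
  have "\<bar>CARD('n) * (norm x^2 + \<epsilon>) powr (-5/6) - 5/3 * (norm x^2 * (norm x^2 + \<epsilon>) powr (-11/6))\<bar>
       \<le> CARD('n) * norm x powr (-5/3) + 5/3 * norm x powr (-5/3)"
    using b n1 by (intro order_trans[OF abs_triangle_ineq4] add_mono) (auto intro: mult_left_mono)
  moreover define X where "X = CARD('n) * (norm x^2 + \<epsilon>) powr (-5/6) - 5/3 * (norm x^2 * (norm x^2 + \<epsilon>) powr (-11/6))"
  moreover define P where "P = norm x powr (-5/3)"
  ultimately have X: "\<bar>X\<bar> \<le> CARD('n) * P + 5/3 * P" by simp
  have "\<bar>-a/3 * X\<bar> = a/3 * \<bar>X\<bar>" using a by (simp add: abs_mult)
  also have "\<dots> \<le> a/3 * (CARD('n) * P + 5/3 * P)" using a X by (intro mult_left_mono) auto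
  also have "\<dots> = a/3 * (CARD('n) + 5/3) * P" by (simp add: algebra_simps)
  finally show ?thesis unfolding sumQ X_def P_def by (simp add: mult.assoc)
qed

lemma bound_Pvec:
  fixes x :: "real^'n" assumes x: "x \<noteq> 0" and e: "\<epsilon> \<ge> 0" and a: "a \<ge> 0" and R: "norm x \<le> R"
  shows "norm (\<chi> i. Pe a \<epsilon> i x) \<le> a/3 * R * norm x powr (-5/3)"
proof -
  have "norm (\<chi> i. Pe a \<epsilon> i x) = a/3 * (norm x^2 + \<epsilon>) powr (-5/6) * norm x"
    using a by (simp add: Pe_vec abs_mult)
  also have "\<dots> \<le> a/3 * norm x powr (-5/3) * R"
    using bound_rho(1)[OF x e] a R by (intro mult_mono mult_left_mono) auto
  finally show ?thesis by (simp add: algebra_simps)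
qed



lemma per_t:
  fixes \<phi> :: "(real^'n) \<times> real \<Rightarrow> real" and R t :: real
  assumes n2: "CARD('n) \<ge> 2" and R: "R > 0" and sm: "smooth_fun \<phi>"
    and cpt: "compact (closure {z. \<phi> z \<noteq> 0})" and sub: "closure {z. \<phi> z \<noteq> 0} \<subseteq> ball 0 R \<times> {0<..}"
  shows "(LINT x:ball 0 R|lborel. grad (ustar CARD('n)) x \<bullet> grad (\<lambda>y. \<phi> (y, t)) x) =
         (LINT x:ball 0 R|lborel. ustar CARD('n) x * (radial_deriv (ustar CARD('n)) x) ^ 3 * \<phi> (x, t))"
proof -
  define n where "n = CARD('n)"
  define a where "a = root 3 (9 * real n - 15)"
  define u where "u = (ustar n :: real^'n \<Rightarrow> real)"
  define S where "S = closure {z. \<phi> z \<noteq> 0}"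
  define Ct where "Ct = (\<lambda>y::real^'n. (y,t)) -` S"
  define f where "f y = \<phi> (y,t)" for y
  define df where "df i y = frechet_derivative \<phi> (at (y,t)) (axis i 1, 0)" for i y
  have n2': "real n \<ge> 2" using n2 by (simp add: n_def)
  have a0: "a > 0" unfolding a_def using n2' by simp
  have a3: "a^3 = 9 * real n - 15" by (simp add: a_def odd_real_root_pow)
  have pair_c: "continuous_on UNIV (\<lambda>y::real^'n. (y,t))" by (intro continuous_intros)
  have CtR: "Ct \<subseteq> ball 0 R" using sub by (auto simp: Ct_def S_def)
  have Ct: "compact Ct"
  proof (subst compact_eq_bounded_closed, rule conjI)
    show "bounded Ct" using CtR bounded_ball bounded_subset by blast
    show "closed Ct" unfolding Ct_def S_def by (intro closed_vimage pair_c) auto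
  qed
  have f0: "f y = 0" if "y \<notin> Ct" for y
  proof -
    have "(y,t) \<notin> S" using that by (simp add: Ct_def)
    then have "(y,t) \<notin> {z. \<phi> z \<noteq> 0}" unfolding S_def using closure_subset[of "{z. \<phi> z \<noteq> 0}"] by (rule contra_subsetD[rotated])
    then show ?thesis by (simp add: f_def)
  qed
  have df0: "df i y = 0" if "y \<notin> Ct" for i y
    unfolding df_def by (rule smooth_d_zero[OF sm]) (use that in \<open>simp add: Ct_def S_def\<close>)
  have fc: "continuous_on UNIV f"
    unfolding f_def by (rule continuous_on_compose2[OF smooth_cont[OF sm] pair_c]) auto
  have dfc: "continuous_on UNIV (df i)" for i
    unfolding df_def by (rule continuous_on_compose2[OF smooth_dcont[OF sm] pair_c]) auto
  have gradf: "grad f y = (\<chi> i. df i y)" for y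
    unfolding f_def df_def by (rule grad_phi[OF sm])
  have gradfc: "continuous_on UNIV (\<lambda>y. grad f y)"
    unfolding gradf by (intro continuous_on_vec_lambda dfc)
  have gradf0: "grad f y = 0" if "y \<notin> Ct" for y
    unfolding gradf using df0[OF that] by (simp add: vec_eq_iff)
  have fline: "((\<lambda>s. f (y + s *\<^sub>R axis i 1)) has_real_derivative df i y) (at 0)" for y i
    using smooth_line_deriv[OF sm, of "(y,t)" "(axis i 1, 0)"] by (simp add: f_def df_def)
  obtain M0 where M0: "\<And>y. y \<in> Ct \<Longrightarrow> norm (f y) \<le> M0" and M0p: "M0 > 0"
    using compact_imp_bounded[OF compact_continuous_image[OF continuous_on_subset[OF fc] Ct]]
    by (auto simp: bounded_pos)
  obtain M1 where M1: "\<And>y. y \<in> Ct \<Longrightarrow> norm (grad f y) \<le> M1" and M1p: "M1 > 0"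
    using compact_imp_bounded[OF compact_continuous_image[OF continuous_on_subset[OF gradfc] Ct]]
    by (auto simp: bounded_pos)
  have M0': "\<bar>f y\<bar> \<le> M0" for y using M0[of y] f0[of y] M0p by (cases "y \<in> Ct") auto
  have M1': "norm (grad f y) \<le> M1" for y using M1[of y] gradf0[of y] M1p by (cases "y \<in> Ct") auto
  have [measurable]: "f \<in> borel_measurable borel" using fc by (simp add: borel_measurable_continuous_onI)
  have [measurable]: "(\<lambda>y. grad f y) \<in> borel_measurable borel" using gradfc by (simp add: borel_measurable_continuous_onI)

  define G where "G \<epsilon> y = (\<Sum>i\<in>UNIV. Qe a \<epsilon> i y) * f y + (\<chi> i. Pe a \<epsilon> i y) \<bullet> grad f y" for \<epsilon> y
  have step1: "integral\<^sup>L lborel (G \<epsilon>) = 0" "integrable lborel (G \<epsilon>)" if e: "\<epsilon> > 0" for \<epsilon>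
  proof -
    have pos: "norm y^2 + \<epsilon> > 0" for y :: "real^'n" using e by (simp add: add_nonneg_pos)
    have pos': "norm y^2 + \<epsilon> \<noteq> 0" for y :: "real^'n" using pos[of y] by simp
    have Pc: "continuous_on UNIV (Pe a \<epsilon> i)" for i :: 'n
      unfolding Pe_def[abs_def] using pos' by (auto intro!: continuous_intros)
    have Qc: "continuous_on UNIV (Qe a \<epsilon> i)" for i :: 'n
      unfolding Qe_def[abs_def] using pos' by (auto intro!: continuous_intros)
    define g where "g i y = Qe a \<epsilon> i y * f y + Pe a \<epsilon> i y * df i y" for i y
    have gi: "integrable lborel (g i)" "integral\<^sup>L lborel (g i) = 0" for i :: 'n
    proof -
      have d: "((\<lambda>s. Pe a \<epsilon> i (y + s *\<^sub>R axis i 1) * f (y + s *\<^sub>R axis i 1)) has_real_derivative g i y) (at 0)" for y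
        using DERIV_mult[OF dPe[OF pos[of y], where a=a and i=i] fline[of y i]] by (simp add: g_def mult.commute)
      note * = int_partial_zero[where h="\<lambda>y. Pe a \<epsilon> i y * f y" and g="g i" and C=Ct and e="axis i 1", OF _ _ Ct _ d]
      have c1: "continuous_on UNIV (\<lambda>y. Pe a \<epsilon> i y * f y)" by (intro continuous_intros Pc fc)
      have c2: "continuous_on UNIV (g i)" unfolding g_def[abs_def] by (intro continuous_intros Pc Qc fc dfc)
      show "integrable lborel (g i)" "integral\<^sup>L lborel (g i) = 0" using *[OF c1 c2] f0 by auto
    qed
    have Gs: "G \<epsilon> y = (\<Sum>i\<in>UNIV. g i y)" for y
      unfolding G_def g_def gradf inner_vec_def by (simp add: sum.distrib sum_distrib_right)
    have "integral\<^sup>L lborel (G \<epsilon>) = (\<Sum>i\<in>UNIV. integral\<^sup>L lborel (g i))"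
      unfolding Gs by (rule Bochner_Integration.integral_sum) (use gi in auto)
    then show "integral\<^sup>L lborel (G \<epsilon>) = 0" using gi by simp
    show "integrable lborel (G \<epsilon>)" unfolding Gs by (intro Bochner_Integration.integrable_sum gi)
  qed
  define \<epsilon> :: "nat \<Rightarrow> real" where "\<epsilon> k = 1 / real (Suc k)" for k
  have \<epsilon>0: "\<epsilon> k > 0" for k by (simp add: \<epsilon>_def)
  have \<epsilon>lim: "\<epsilon> \<longlonglongrightarrow> 0" unfolding \<epsilon>_def using LIMSEQ_inverse_real_of_nat by (simp add: inverse_eq_divide)
  define w where "w y = u y * radial_deriv u y ^ 3" for y
  have wf: "w y = a^4/27 * norm y powr (-5/3)" for y by (simp add: w_def u_def a_def w_ustar)
  have a4: "a^4/27 = a/3 * (real n - 5/3)"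
  proof -
    have "a^4 = a * a^3" by (simp add: power_def)
    then show ?thesis using a3 by (simp add: field_simps)
  qed
  have wQ: "(\<Sum>i\<in>UNIV. Qe a 0 i y) = - w y" if "y \<noteq> 0" for y :: "real^'n"
    using sumQ0[OF that, of a] unfolding wf a4 n_def by simp
  have gradu: "grad u y = (\<chi> i. Pe a 0 i y)" if "y \<noteq> 0" for y :: "real^'n"
    unfolding u_def a_def by (rule grad_ustar[OF that])
  define Lim where "Lim y = grad u y \<bullet> grad f y - w y * f y" for y
  have gum[measurable]: "(\<lambda>y. grad u y) \<in> borel_measurable borel"
  proof -
    have "(\<lambda>y. grad u y) = (\<lambda>y. if y = 0 then grad u 0 else (-a/3 * (norm y^2 + 0) powr (-5/6)) *\<^sub>R y)"
      using gradu by (auto simp: Pe_vec)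
    moreover have "(\<lambda>y::real^'n. if y = 0 then grad u 0 else (-a/3 * (norm y^2 + 0) powr (-5/6)) *\<^sub>R y) \<in> borel_measurable borel"
      by measurable
    ultimately show ?thesis by metis
  qed
  have wm[measurable]: "w \<in> borel_measurable borel" unfolding wf[abs_def] by measurable
  have Limm: "Lim \<in> borel_measurable lborel" unfolding Lim_def[abs_def] by measurable
  define K where "K = a/3 * (real n + 5/3) * M0 + a/3 * R * M1"
  define W where "W y = K * (indicator (cball 0 R) y * norm y powr (-5/3))" for y :: "real^'n"
  have Wi: "integrable lborel W"
    unfolding W_def[abs_def] by (intro integrable_mult_right integrable_norm_powr R) (use n2 in simp)
  have lim: "(\<lambda>k. G (\<epsilon> k) y) \<longlonglongrightarrow> Lim y" if y: "y \<noteq> 0" for y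
  proof -
    have ny: "norm y^2 + 0 \<noteq> 0" using y by simp
    have "(\<lambda>k. \<Sum>i\<in>UNIV. Qe a (\<epsilon> k) i y) \<longlonglongrightarrow> (\<Sum>i\<in>UNIV. Qe a 0 i y)"
      unfolding Qe_def by (intro tendsto_intros \<epsilon>lim) (use ny in auto)
    moreover have "(\<lambda>k. (\<chi> i. Pe a (\<epsilon> k) i y)) \<longlonglongrightarrow> (\<chi> i. Pe a 0 i y)"
      unfolding Pe_vec by (intro tendsto_intros \<epsilon>lim) (use ny in auto)
    ultimately have "(\<lambda>k. G (\<epsilon> k) y) \<longlonglongrightarrow> (\<Sum>i\<in>UNIV. Qe a 0 i y) * f y + (\<chi> i. Pe a 0 i y) \<bullet> grad f y"
      unfolding G_def by (rule tendsto_add[OF tendsto_mult[OF _ tendsto_const] tendsto_inner[OF _ tendsto_const]])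
    then show ?thesis unfolding Lim_def wQ[OF y] gradu[OF y] by (simp add: algebra_simps)
  qed
  have bnd: "norm (G (\<epsilon> k) y) \<le> W y" if y: "y \<noteq> 0" for y k
  proof (cases "y \<in> cball 0 R")
    case True
    have yR: "norm y \<le> R" using True by simp
    have "norm (G (\<epsilon> k) y) \<le> \<bar>\<Sum>i\<in>UNIV. Qe a (\<epsilon> k) i y\<bar> * \<bar>f y\<bar> + norm (\<chi> i. Pe a (\<epsilon> k) i y) * norm (grad f y)"
      unfolding G_def real_norm_def by (rule order_trans[OF abs_triangle_ineq], intro add_mono) (auto simp: abs_mult Cauchy_Schwarz_ineq2)
    also have "\<dots> \<le> (a/3 * (CARD('n) + 5/3) * norm y powr (-5/3)) * M0 + (a/3 * R * norm y powr (-5/3)) * M1"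
      using bound_sumQ[OF y less_imp_le[OF \<epsilon>0[of k]], of a] bound_Pvec[OF y less_imp_le[OF \<epsilon>0[of k]] _ yR, of a] a0 M0' M1' R
      by (intro add_mono mult_mono) auto
    also have "\<dots> = W y" using True by (simp add: W_def K_def n_def algebra_simps)
    finally show ?thesis .
  next
    case False
    then have "y \<notin> Ct" using CtR by auto
    then show ?thesis using False by (simp add: G_def W_def f0 gradf0)
  qed
  have Gm: "G (\<epsilon> k) \<in> borel_measurable lborel" for k using step1(2)[OF \<epsilon>0[of k]] by (rule borel_measurable_integrable)
  have AE0: "AE y in lborel. y \<noteq> (0::real^'n)" by (rule AE_lborel_singleton)
  have AEl: "AE y in lborel. (\<lambda>k. G (\<epsilon> k) y) \<longlonglongrightarrow> Lim y"
    by (rule AE_mp[OF AE0]) (auto intro!: AE_I2 lim)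
  have AEb: "AE y in lborel. norm (G (\<epsilon> k) y) \<le> W y" for k
    by (rule AE_mp[OF AE0], rule AE_I2, rule impI, erule bnd)
  have Limi: "integrable lborel Lim"
    by (rule integrable_dominated_convergence[where s="\<lambda>k. G (\<epsilon> k)", OF Limm Gm Wi AEl AEb])
  have "(\<lambda>k. integral\<^sup>L lborel (G (\<epsilon> k))) \<longlonglongrightarrow> integral\<^sup>L lborel Lim"
    by (rule integral_dominated_convergence[where s="\<lambda>k. G (\<epsilon> k)", OF Limm Gm Wi AEl AEb])
  then have Lim0: "integral\<^sup>L lborel Lim = 0" using step1(1)[OF \<epsilon>0] by (simp add: LIMSEQ_const_iff)
  have wfi: "integrable lborel (\<lambda>y. w y * f y)"
  proof (rule Bochner_Integration.integrable_bound[OF integrable_mult_right[OF integrable_norm_powr[OF _ R]]])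
    show "DIM(real^'n) \<ge> 2" using n2 by simp
    show "(\<lambda>y. w y * f y) \<in> borel_measurable lborel" by measurable
    show "AE y in lborel. norm (w y * f y) \<le> norm (a^4/27 * M0 * (indicator (cball 0 R) y * norm y powr (-5/3)))"
    proof (rule AE_I2)
      fix y :: "real^'n"
      show "norm (w y * f y) \<le> norm (a^4/27 * M0 * (indicator (cball 0 R) y * norm y powr (-5/3)))"
      proof (cases "y \<in> cball 0 R")
        case True
        have "norm (w y * f y) = a^4/27 * norm y powr (-5/3) * \<bar>f y\<bar>" using a0 by (simp add: wf abs_mult)
        also have "\<dots> \<le> a^4/27 * norm y powr (-5/3) * M0" using M0' a0 by (intro mult_left_mono) auto
        finally show ?thesis using True a0 M0p by (simp add: abs_mult algebra_simps)
      next
        case False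
        then have "y \<notin> Ct" using CtR by auto
        then show ?thesis by (simp add: f0)
      qed
    qed
  qed
  have gui: "integrable lborel (\<lambda>y. grad u y \<bullet> grad f y)"
  proof -
    have "integrable lborel (\<lambda>y. Lim y + w y * f y)" by (intro Bochner_Integration.integrable_add Limi wfi)
    then show ?thesis by (simp add: Lim_def)
  qed
  have eq: "integral\<^sup>L lborel (\<lambda>y. grad u y \<bullet> grad f y) = integral\<^sup>L lborel (\<lambda>y. w y * f y)"
  proof -
    have "integral\<^sup>L lborel Lim = integral\<^sup>L lborel (\<lambda>y. grad u y \<bullet> grad f y) - integral\<^sup>L lborel (\<lambda>y. w y * f y)"
      unfolding Lim_def by (rule Bochner_Integration.integral_diff[OF gui wfi])
    then show ?thesis using Lim0 by simp
  qed
  have s1: "(LINT x:ball 0 R|lborel. grad u x \<bullet> grad f x) = integral\<^sup>L lborel (\<lambda>y. grad u y \<bullet> grad f y)"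
    unfolding set_lebesgue_integral_def
  proof (rule Bochner_Integration.integral_cong[OF refl])
    fix y :: "real^'n"
    show "indicator (ball 0 R) y *\<^sub>R (grad u y \<bullet> grad f y) = grad u y \<bullet> grad f y"
    proof (cases "y \<in> ball 0 R")
      case False
      then have "y \<notin> Ct" using CtR by blast
      then show ?thesis using gradf0[of y] False by simp
    qed simp
  qed
  have s2: "(LINT x:ball 0 R|lborel. w x * f x) = integral\<^sup>L lborel (\<lambda>y. w y * f y)"
    unfolding set_lebesgue_integral_def
  proof (rule Bochner_Integration.integral_cong[OF refl])
    fix y :: "real^'n"
    show "indicator (ball 0 R) y *\<^sub>R (w y * f y) = w y * f y"
    proof (cases "y \<in> ball 0 R")
      case False
      then have "y \<notin> Ct" using CtR by blast
      then show ?thesis using f0[of y] False by simp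
    qed simp
  qed
  have "(LINT x:ball 0 R|lborel. grad u x \<bullet> grad f x) = (LINT x:ball 0 R|lborel. w x * f x)"
    using s1 s2 eq by simp
  then show ?thesis by (simp add: u_def n_def w_def f_def[abs_def])
qed



lemma time_zero:
  fixes \<phi> :: "(real^'n) \<times> real \<Rightarrow> real" and R :: real and U :: "real^'n \<Rightarrow> real"
  assumes R: "R > 0" and sm: "smooth_fun \<phi>"
    and cpt: "compact (closure {z. \<phi> z \<noteq> 0})" and sub: "closure {z. \<phi> z \<noteq> 0} \<subseteq> ball 0 R \<times> {0<..}"
    and Uc: "continuous_on UNIV U"
  shows "(LINT t:{0<..}|lborel. LINT x:ball 0 R|lborel. deriv (\<lambda>s. \<phi> (x, s)) t * U x) = 0"
proof -
  define S where "S = closure {z. \<phi> z \<noteq> 0}"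
  define dt where "dt z = frechet_derivative \<phi> (at z) (0, 1)" for z
  have S: "compact S" using cpt by (simp add: S_def)
  have phi0: "\<phi> z = 0" if "z \<notin> S" for z
  proof -
    have "z \<notin> closure {z. \<phi> z \<noteq> 0}" using that by (simp add: S_def)
    then have "z \<notin> {z. \<phi> z \<noteq> 0}" using closure_subset[of "{z. \<phi> z \<noteq> 0}"] by (rule contra_subsetD[rotated])
    then show ?thesis by simp
  qed
  have dt0: "dt z = 0" if "z \<notin> S" for z
    unfolding dt_def by (rule smooth_d_zero[OF sm]) (use that in \<open>simp add: S_def\<close>)
  have dtc: "continuous_on UNIV dt" unfolding dt_def[abs_def] by (rule smooth_dcont[OF sm])
  have dteq: "deriv (\<lambda>s. \<phi> (x, s)) t = dt (x,t)" for x t unfolding dt_def by (rule dt_phi[OF sm])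
  have Spos: "snd z > 0" if "z \<in> S" for z
  proof -
    have "z \<in> ball 0 R \<times> {0<..}" using sub that unfolding S_def by (rule subsetD)
    then show ?thesis by (simp add: mem_Times_iff)
  qed
  have cl: "closed (UNIV \<times> {..0::real} :: ((real^'n) \<times> real) set)" by (intro closed_Times) auto
  have dis: "S \<inter> (UNIV \<times> {..0}) = {}"
  proof (rule equals0I)
    fix z assume "z \<in> S \<inter> (UNIV \<times> {..0})"
    then have "snd z > 0" "snd z \<le> 0" using Spos by (auto simp: mem_Times_iff)
    then show False by simp
  qed
  from separate_compact_closed[OF S cl dis] obtain \<delta> where
    \<delta>0: "\<delta> > 0" and \<delta>1: "\<forall>z\<in>S. \<forall>y\<in>UNIV \<times> {..0}. \<delta> \<le> dist z y" by blast
  have \<delta>: "\<delta> > 0" "\<And>z y. z \<in> S \<Longrightarrow> y \<in> UNIV \<times> {..0} \<Longrightarrow> \<delta> \<le> dist z y" using \<delta>0 \<delta>1 by auto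
  obtain B where B: "\<And>z. z \<in> S \<Longrightarrow> norm z \<le> B" using compact_imp_bounded[OF S] by (auto simp: bounded_iff)
  have Stime: "\<delta> \<le> snd z \<and> snd z \<le> B" if "z \<in> S" for z
  proof -
    obtain x t where z: "z = (x,t)" by (cases z)
    have tpos: "t > 0" using Spos[OF that] z by simp
    have "\<delta> \<le> dist (x,t) (x,0)" using \<delta>(2)[of z "(x,0)"] that z by auto
    also have "dist (x,t) (x,0) = \<bar>t\<bar>" by (simp add: dist_Pair_Pair dist_real_def)
    finally have 1: "\<delta> \<le> t" using tpos by simp
    have "\<bar>t\<bar> \<le> norm (x,t)" using norm_snd_le[of t x] by simp
    then have "t \<le> B" using B[OF that] z by simp
    with 1 z show ?thesis by simp
  qed
  define a where "a = \<delta>/2"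
  define b where "b = max B a + 1"
  have a0: "a > 0" using \<delta> by (simp add: a_def)
  define H where "H x t = indicator (ball 0 R) x * (indicator {0<..} t * (dt (x,t) * U x))" for x :: "real^'n" and t :: real
  have [measurable]: "dt \<in> borel_measurable borel" using dtc by (simp add: borel_measurable_continuous_onI)
  have [measurable]: "U \<in> borel_measurable borel" using Uc by (simp add: borel_measurable_continuous_onI)
  have dtm2[measurable]: "dt \<in> borel_measurable (lborel \<Otimes>\<^sub>M lborel)" by (simp add: lborel_prod)
  have [measurable]: "ball (0::real^'n) R \<in> sets borel" "{0::real<..} \<in> sets borel" by auto
  have Hm: "case_prod H \<in> borel_measurable (lborel \<Otimes>\<^sub>M lborel)"
  proof -
    have "case_prod H = (\<lambda>z. indicator (ball 0 R) (fst z) * (indicator {0<..} (snd z) * (dt z * U (fst z))))"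
      by (auto simp: H_def)
    also have "\<dots> \<in> borel_measurable (lborel \<Otimes>\<^sub>M lborel)" by measurable
    finally show ?thesis .
  qed
  obtain M1 where M1: "\<And>z. z \<in> S \<Longrightarrow> norm (dt z) \<le> M1"
    using compact_imp_bounded[OF compact_continuous_image[OF continuous_on_subset[OF dtc] S]] by (auto simp: bounded_iff)
  obtain M2 where M2: "\<And>x. x \<in> cball 0 R \<Longrightarrow> norm (U x) \<le> M2"
  proof -
    have "bounded (U ` cball 0 R)"
      by (rule compact_imp_bounded[OF compact_continuous_image[OF continuous_on_subset[OF Uc] compact_cball]]) auto
    then obtain M where "\<forall>y\<in>U ` cball 0 R. norm y \<le> M" by (auto simp: bounded_iff)
    then show ?thesis using that by blast
  qed
  have Hi: "integrable (lborel \<Otimes>\<^sub>M lborel) (case_prod H)"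
  proof -
    have "integrable lborel (case_prod H)"
    proof (rule integrableI_bounded_set[where A=S and B="M1 * M2"])
      show "S \<in> sets lborel" using S by (simp add: compact_imp_closed)
      show "case_prod H \<in> borel_measurable lborel" using Hm by (simp add: lborel_prod)
      show "emeasure lborel S < \<infinity>" using S by (intro emeasure_bounded_finite compact_imp_bounded)
      show "AE z in lborel. z \<in> S \<longrightarrow> norm (case_prod H z) \<le> M1 * M2"
      proof (rule AE_I2, rule impI)
        fix zz :: "(real^'n) \<times> real" assume zz: "zz \<in> S"
        obtain x t where zx: "zz = (x,t)" by (cases zz)
        have z: "(x,t) \<in> S" using zz zx by simp
        have "norm (H x t) \<le> norm (dt (x,t)) * norm (U x)"
          by (auto simp: H_def indicator_def abs_mult)
        also have "\<dots> \<le> M1 * M2"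
        proof (cases "x \<in> cball 0 R")
          case True then show ?thesis using M1[OF z] M2[OF True] by (intro mult_mono) (auto intro: order_trans[OF norm_ge_zero])
        next
          case False
          have "x \<in> ball 0 R" using sub z by (auto simp: S_def)
          with False show ?thesis by auto
        qed
        finally show "norm (case_prod H zz) \<le> M1 * M2" using zx by simp
      qed
      show "AE z in lborel. z \<notin> S \<longrightarrow> case_prod H z = 0"
        by (rule AE_I2) (auto simp: H_def dt0)
    qed
    then show ?thesis by (simp add: lborel_prod)
  qed
  have inner: "(LINT t|lborel. H x t) = 0" for x
  proof -
    have "(LINT t|lborel. H x t) = (LINT t|lborel. (indicator (ball 0 R) x * U x) * (dt (x,t) * indicator {a..b} t))"
    proof (rule Bochner_Integration.integral_cong[OF refl])
      fix t
      show "H x t = indicator (ball 0 R) x * U x * (dt (x, t) * indicator {a..b} t)"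
      proof (cases "(x,t) \<in> S")
        case True
        with Stime[OF True] \<delta>(1) have "t \<in> {a..b}" "t > 0" by (auto simp: a_def b_def)
        then show ?thesis by (simp add: H_def)
      next
        case False then show ?thesis by (simp add: H_def dt0)
      qed
    qed
    also have "\<dots> = (indicator (ball 0 R) x * U x) * (LINT t|lborel. dt (x,t) * indicator {a..b} t)"
      by simp
    also have "(LINT t|lborel. dt (x,t) * indicator {a..b} t) = \<phi> (x, b) - \<phi> (x, a)"
    proof (rule integral_FTC_Icc_real)
      show "a \<le> b" by (simp add: b_def)
      fix t
      have "((\<lambda>s. \<phi> (x, s + t)) has_real_derivative dt (x,t)) (at 0)"
        using smooth_line_deriv[OF sm, of "(x,t)" "(0,1)"] by (simp add: dt_def add.commute)
      then show "DERIV (\<lambda>s. \<phi> (x, s)) t :> dt (x, t)"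
        using DERIV_shift[of "\<lambda>s. \<phi> (x, s)" _ 0 t] by simp
      have "continuous_on UNIV (\<lambda>t. dt (x, t))"
        by (rule continuous_on_compose2[OF dtc]) (auto intro!: continuous_intros)
      then show "isCont (\<lambda>t. dt (x, t)) t" by (simp add: continuous_on_eq_continuous_at)
    qed
    also have "\<phi> (x, b) = 0" using Stime[of "(x,b)"] by (intro phi0) (auto simp: b_def)
    also have "\<phi> (x, a) = 0" using Stime[of "(x,a)"] \<delta> by (intro phi0) (auto simp: a_def)
    finally show ?thesis by simp
  qed
  have "(LINT t:{0<..}|lborel. LINT x:ball 0 R|lborel. deriv (\<lambda>s. \<phi> (x, s)) t * U x)
       = (LINT t|lborel. LINT x|lborel. H x t)"
    unfolding set_lebesgue_integral_def H_def dteq by (simp add: mult.left_commute flip: integral_mult_right_zero)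
  also have "\<dots> = (LINT x|lborel. LINT t|lborel. H x t)"
    by (rule lborel_pair.Fubini_integral[OF Hi])
  also have "\<dots> = 0" by (simp add: inner)
  finally show ?thesis .
qed



lemma grad_ustar_meas: "(\<lambda>y. grad (ustar n) y :: real^'n) \<in> borel_measurable borel"
proof -
  define a where "a = root 3 (9 * real n - 15)"
  have "(\<lambda>y. grad (ustar n) y :: real^'n) = (\<lambda>y. if y = 0 then grad (ustar n) 0 else (-a/3 * (norm y^2 + 0) powr (-5/6)) *\<^sub>R y)"
  proof (rule ext)
    fix y :: "real^'n"
    show "grad (ustar n) y = (if y = 0 then grad (ustar n) 0 else (-a/3 * (norm y^2 + 0) powr (-5/6)) *\<^sub>R y)"
      using grad_ustar[of y n] by (cases "y = 0") (simp_all add: Pe_vec a_def)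
  qed
  moreover have "(\<lambda>y::real^'n. if y = 0 then grad (ustar n) 0 else (-a/3 * (norm y^2 + 0) powr (-5/6)) *\<^sub>R y) \<in> borel_measurable borel"
    by measurable
  ultimately show ?thesis by metis
qed

theorem mainTheorem7:
  fixes R :: real
  assumes n2: "CARD('n) \<ge> 2"
    and R: "R > 0"
  defines "u \<equiv> (ustar CARD('n) :: real^'n \<Rightarrow> real)"
  shows "loc_integrable_on (\<lambda>(x::real^'n, t::real). u x * (radial_deriv u x) ^ 3)
            (ball 0 R \<times> {0..})
       \<and> loc_integrable_on (\<lambda>(x::real^'n, t::real). grad u x) (ball 0 R \<times> {0..})
       \<and> (\<forall>\<phi> :: (real^'n) \<times> real \<Rightarrow> real. test_fun_on (ball 0 R \<times> {0<..}) \<phi> \<longrightarrow>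
           - (LINT t:{0<..}|lborel. LINT x:ball 0 R|lborel.
                 deriv (\<lambda>s. \<phi> (x, s)) t * u x)
         = - (LINT t:{0<..}|lborel. LINT x:ball 0 R|lborel.
                 grad u x \<bullet> grad (\<lambda>y. \<phi> (y, t)) x)
           + (LINT t:{0<..}|lborel. LINT x:ball 0 R|lborel.
                 u x * (radial_deriv u x) ^ 3 * \<phi> (x, t)))"
proof (intro conjI allI impI)
  define a where "a = root 3 (9 * real CARD('n) - 15)"
  have a0: "a > 0" unfolding a_def using n2 by simp
  have dim: "DIM(real^'n) \<ge> 2" using n2 by simp
  show "loc_integrable_on (\<lambda>(x::real^'n, t::real). u x * (radial_deriv u x) ^ 3) (ball 0 R \<times> {0..})"
    unfolding loc_integrable_on_def
  proof (rule loc_int_prod[OF dim R, where C="a^4/27" and D=0])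
    have "(\<lambda>x. u x * (radial_deriv u x) ^ 3) = (\<lambda>x::real^'n. a^4/27 * norm x powr (-5/3))"
      by (simp add: u_def w_ustar a_def)
    moreover have "(\<lambda>x::real^'n. a^4/27 * norm x powr (-5/3)) \<in> borel_measurable borel" by measurable
    ultimately show "(\<lambda>x. u x * (radial_deriv u x) ^ 3) \<in> borel_measurable borel" by metis
    fix x :: "real^'n"
    show "norm (u x * radial_deriv u x ^ 3) \<le> a^4/27 * norm x powr (-5/3) + 0"
      by (simp add: u_def w_ustar a_def)
  qed
  show "loc_integrable_on (\<lambda>(x::real^'n, t::real). grad u x) (ball 0 R \<times> {0..})"
    unfolding loc_integrable_on_def
  proof (rule loc_int_prod[OF dim R, where C="a/3 * R" and D="norm (grad u 0)"])
    show "(\<lambda>x. grad u x) \<in> borel_measurable borel" unfolding u_def by (rule grad_ustar_meas)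
    fix x :: "real^'n" assume x: "x \<in> ball 0 R"
    show "norm (grad u x) \<le> a/3 * R * norm x powr (-5/3) + norm (grad u 0)"
    proof (cases "x = 0")
      case True then show ?thesis by simp
    next
      case False
      have "norm (grad u x) \<le> a/3 * R * norm x powr (-5/3)"
        unfolding u_def grad_ustar[OF False] a_def[symmetric]
        by (rule bound_Pvec[OF False]) (use a0 x in auto)
      then show ?thesis using norm_ge_zero[of "grad u 0"] by linarith
    qed
  qed
  fix \<phi> :: "(real^'n) \<times> real \<Rightarrow> real"
  assume tf: "test_fun_on (ball 0 R \<times> {0<..}) \<phi>"
  then have sm: "smooth_fun \<phi>" and cpt: "compact (closure {z. \<phi> z \<noteq> 0})"
    and sub: "closure {z. \<phi> z \<noteq> 0} \<subseteq> ball 0 R \<times> {0<..}" by (auto simp: test_fun_on_def)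
  have uc: "continuous_on UNIV u"
    unfolding u_def ustar_def[abs_def] by (intro continuous_on_mult_left continuous_on_powr' continuous_on_norm continuous_on_id continuous_on_const) auto
  have lhs: "(LINT t:{0<..}|lborel. LINT x:ball 0 R|lborel. deriv (\<lambda>s. \<phi> (x, s)) t * u x) = 0"
    by (rule time_zero[OF R sm cpt sub uc])
  have "(\<lambda>t. LINT x:ball 0 R|lborel. grad u x \<bullet> grad (\<lambda>y. \<phi> (y, t)) x) =
        (\<lambda>t. LINT x:ball 0 R|lborel. u x * (radial_deriv u x) ^ 3 * \<phi> (x, t))"
    unfolding u_def by (intro ext per_t[OF n2 R sm cpt sub])
  then show "- (LINT t:{0<..}|lborel. LINT x:ball 0 R|lborel. deriv (\<lambda>s. \<phi> (x, s)) t * u x)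
         = - (LINT t:{0<..}|lborel. LINT x:ball 0 R|lborel. grad u x \<bullet> grad (\<lambda>y. \<phi> (y, t)) x)
           + (LINT t:{0<..}|lborel. LINT x:ball 0 R|lborel. u x * (radial_deriv u x) ^ 3 * \<phi> (x, t))"
    using lhs by simp
qed

end
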